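(* In the setting described in the context (with $Q$ possibly infinite-dimensional and $\Omega$ admissible), for $\tau\in L$ let $k^{\mathrm{S}}_\tau:Q\to\mathbb{C}$ be $$k^{\mathrm{S}}_\tau(\phi)=\exp\Big(\Omega(q(\tau),\phi)+\mathrm{i}[\tau,\phi]-\tfrac12\Omega(q(\tau),q(\tau))-\tfrac{\mathrm{i}}{2}[\tau,\tau]\Big),$$ and regard it (by its canonical extension) as a continuous function on $\hat{Q}$. Then the linear span of $\{k^{\mathrm{S}}_\tau:\tau\in L\}$ is dense in $\mathrm{L}^2(\hat{Q},\nu_Q)$.
   Context: $L$ is a real vector space and $[\cdot,\cdot]:L\times L\to\mathbb{R}$ is bilinear such that $\omega(\xi,\xi')=\frac12[\xi,\xi']-\frac12[\xi',\xi]$ is non-degenerate. $M=\{\tau\in L:[\xi,\tau]=0\ \forall\xi\in L\}$, $N=\{\tau\in L:[\tau,\xi]=0\ \forall\xi\in L\}$, and $L=M\oplus N$ is assumed. $Q=L/M$ with quotient map $q$; $[\cdot,\cdot]$ descends to $L\times Q\to\mathbb{R}$. $\Omega:Q\times Q\to\mathbb{C}$ is a symmetric bilinear form with positive definite real part which is admissible: $Q$ with inner product $\Re\Omega$ is a separable real Hilbert space, $\Im\Omega$ is continuous, for every $\xi\in L$ the map $\phi\mapsto[\xi,\phi]$ is continuous on $Q$, and every continuous linear map $Q\to\mathbb{R}$ is of the form $\phi\mapsto[\xi,\phi]$ for some $\xi\in L$. $\hat{Q}$ denotes the algebraic dual of the topological dual $Q^*$ of $Q$, with the canonical inclusion $Q\hookrightarrow\hat{Q}$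 and the initial topology making all evaluations $\hat{Q}\ni x\mapsto x(\ell)$, $\ell\in Q^*$, continuous. $\nu_Q$ is the Gaussian probability measure on $\hat{Q}$ determined by $\int_{\hat{Q}}\exp(\mathrm{i}\,x(\ell))\,\mathrm{d}\nu_Q(x)=\exp(-\frac14\|\ell\|^2)$ for all $\ell\in Q^*$ (equivalently, its pushforward to every finite-dimensional quotient of $Q$ is the Gaussian measure with density proportional to $\exp(-\Re\Omega(\phi,\phi))$ in the quotient norm). A continuous function on $Q$ that is invariant under translations by a closed subspace $W$ of finite codimension factors through the finite-dimensional space $Q/W$, which is also a quotient of $\hat{Q}$; this gives its canonical extension to a continuous function on $\hat{Q}$. Each $k^{\mathrm{S}}_\tau$ is of this type. *)

theory Defs
  imports "HOL-Analysis.Analysis" "HOL-Probability.Probability"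
begin

definition omegaF :: "('l \<Rightarrow> 'l \<Rightarrow> real) \<Rightarrow> 'l \<Rightarrow> 'l \<Rightarrow> real" where
  "omegaF br \<xi> \<xi>' = (1/2) * br \<xi> \<xi>' - (1/2) * br \<xi>' \<xi>"

definition Mspace :: "('l \<Rightarrow> 'l \<Rightarrow> real) \<Rightarrow> 'l set" where
  "Mspace br = {\<tau>. \<forall>\<xi>. br \<xi> \<tau> = 0}"

definition Nspace :: "('l \<Rightarrow> 'l \<Rightarrow> real) \<Rightarrow> 'l set" where
  "Nspace br = {\<tau>. \<forall>\<xi>. br \<tau> \<xi> = 0}"

text \<open>The descended pairing L x Q -> R, [xi, phi] = [xi, tau] for any tau with q tau = phi.\<close>
definition brQ :: "('l \<Rightarrow> 'l \<Rightarrow> real) \<Rightarrow> ('l \<Rightarrow> 'q) \<Rightarrow> 'l \<Rightarrow> 'q \<Rightarrow> real" where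
  "brQ br q \<xi> \<phi> = br \<xi> (SOME \<tau>. q \<tau> = \<phi>)"

definition Qstar :: "('q::real_normed_vector \<Rightarrow> real) set" where
  "Qstar = {l. bounded_linear l}"

text \<open>Algebraic dual of Q* (functions extended by 0 outside Q*, so that this set is in
  bijection with the algebraic dual).\<close>
definition Qhat :: "(('q::real_normed_vector \<Rightarrow> real) \<Rightarrow> real) set" where
  "Qhat = {x. (\<forall>l1\<in>Qstar. \<forall>l2\<in>Qstar. x (\<lambda>\<phi>. l1 \<phi> + l2 \<phi>) = x l1 + x l2)
            \<and> (\<forall>c. \<forall>l\<in>Qstar. x (\<lambda>\<phi>. c * l \<phi>) = c * x l)
            \<and> (\<forall>l. l \<notin> Qstar \<longrightarrow> x l = 0)}"

definition Qhat_sets :: "(('q::real_normed_vector \<Rightarrow> real) \<Rightarrow> real) set set" where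
  "Qhat_sets = sigma_sets Qhat
     (\<Union>l\<in>Qstar. {{x \<in> Qhat. x l \<in> B} | B. B \<in> sets borel})"

definition closed_fin_codim :: "'q::real_normed_vector set \<Rightarrow> bool" where
  "closed_fin_codim W \<longleftrightarrow> subspace W \<and> closed W \<and> (\<exists>B. finite B \<and> span (W \<union> B) = UNIV)"

definition transl_invariant :: "('q::real_normed_vector \<Rightarrow> 'b) \<Rightarrow> 'q set \<Rightarrow> bool" where
  "transl_invariant f W \<longleftrightarrow> (\<forall>\<phi> w. w \<in> W \<longrightarrow> f (\<phi> + w) = f \<phi>)"

text \<open>Canonical extension to Qhat of a function on Q that is invariant under translations
  by a closed subspace W of finite codimension: it factors through Q/W, and Q/W is a quotient
  of Qhat via x |-> (the phi in Q, unique mod W, with l phi = x l for all l in Q* annihilating W).\<close>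
definition canon_ext :: "('q::real_normed_vector \<Rightarrow> 'b) \<Rightarrow> (('q \<Rightarrow> real) \<Rightarrow> real) \<Rightarrow> 'b" where
  "canon_ext f x =
     (let W = (SOME W. closed_fin_codim W \<and> transl_invariant f W)
      in f (SOME \<phi>. \<forall>l\<in>Qstar. (\<forall>w\<in>W. l w = 0) \<longrightarrow> l \<phi> = x l))"

definition kS :: "('l \<Rightarrow> 'l \<Rightarrow> real) \<Rightarrow> ('l \<Rightarrow> 'q) \<Rightarrow> ('q \<Rightarrow> 'q \<Rightarrow> complex) \<Rightarrow> 'l \<Rightarrow> 'q \<Rightarrow> complex" where
  "kS br q \<Omega> \<tau> \<phi> = exp (\<Omega> (q \<tau>) \<phi> + \<i> * complex_of_real (brQ br q \<tau> \<phi>)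
        - (1/2) * \<Omega> (q \<tau>) (q \<tau>) - (\<i>/2) * complex_of_real (br \<tau> \<tau>))"

end

theory Submission imports Defs begin



definition L2 :: "'a measure \<Rightarrow> ('a \<Rightarrow> complex) \<Rightarrow> bool" where
  "L2 M f \<longleftrightarrow> f \<in> borel_measurable M \<and> integrable M (\<lambda>x. (cmod (f x))\<^sup>2)"

lemma sq_le: "(cmod (a - b))\<^sup>2 \<le> 2 * (cmod a)\<^sup>2 + 2 * (cmod b)\<^sup>2"
proof -
  have "cmod (a - b) \<le> cmod a + cmod b" by (rule norm_triangle_ineq4)
  hence "(cmod (a - b))\<^sup>2 \<le> (cmod a + cmod b)\<^sup>2" by (simp add: power_mono)
  also have "\<dots> \<le> 2 * (cmod a)\<^sup>2 + 2 * (cmod b)\<^sup>2"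
  proof -
    have "0 \<le> (cmod a - cmod b)\<^sup>2" by simp
    thus ?thesis by (simp add: power2_sum power2_diff)
  qed
  finally show ?thesis .
qed

lemma sq_le_add: "(cmod (a + b))\<^sup>2 \<le> 2 * (cmod a)\<^sup>2 + 2 * (cmod b)\<^sup>2"
  using sq_le[of a "-b"] by simp

lemma L2_diff_int:
  assumes "L2 M f" "L2 M g" shows "integrable M (\<lambda>x. (cmod (f x - g x))\<^sup>2)"
proof (rule Bochner_Integration.integrable_bound)
  show "integrable M (\<lambda>x. 2 * (cmod (f x))\<^sup>2 + 2 * (cmod (g x))\<^sup>2)"
    using assms unfolding L2_def by auto
  show "(\<lambda>x. (cmod (f x - g x))\<^sup>2) \<in> borel_measurable M" using assms unfolding L2_def by auto
  show "AE x in M. norm ((cmod (f x - g x))\<^sup>2) \<le> norm (2 * (cmod (f x))\<^sup>2 + 2 * (cmod (g x))\<^sup>2)"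
    using sq_le by (auto intro!: AE_I2)
qed

lemma L2_add: assumes "L2 M f" "L2 M g" shows "L2 M (\<lambda>x. f x + g x)"
  unfolding L2_def
proof
  show "(\<lambda>x. f x + g x) \<in> borel_measurable M" using assms unfolding L2_def by auto
  show "integrable M (\<lambda>x. (cmod (f x + g x))\<^sup>2)"
    using L2_diff_int[OF assms(1), of "\<lambda>x. - g x"] assms unfolding L2_def by auto
qed

lemma L2_scale: assumes "L2 M f" shows "L2 M (\<lambda>x. c * f x)"
  using assms unfolding L2_def by (auto simp: norm_mult power_mult_distrib)

lemma L2_minus: assumes "L2 M f" "L2 M g" shows "L2 M (\<lambda>x. f x - g x)"
  using L2_add[OF assms(1) L2_scale[OF assms(2), of "-1"]] by simp

lemma L2_bounded:
  assumes "finite_measure M" "f \<in> borel_measurable M" "\<And>x. x \<in> space M \<Longrightarrow> cmod (f x) \<le> C"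
  shows "L2 M f"
  unfolding L2_def
proof
  show "f \<in> borel_measurable M" by fact
  show "integrable M (\<lambda>x. (cmod (f x))\<^sup>2)"
  proof (rule Bochner_Integration.integrable_bound)
    show "integrable M (\<lambda>x. C\<^sup>2)" using assms(1) by (simp add: finite_measure.integrable_const)
    show "(\<lambda>x. (cmod (f x))\<^sup>2) \<in> borel_measurable M" using assms by auto
    show "AE x in M. norm ((cmod (f x))\<^sup>2) \<le> norm (C\<^sup>2)"
      using assms(3) by (auto intro!: AE_I2 power_mono simp: abs_le_square_iff)
  qed
qed

lemma sq_tri:
  assumes "L2 M f" "L2 M g" "L2 M h"
  shows "(\<integral>x. (cmod (f x - h x))\<^sup>2 \<partial>M) \<le> 2 * (\<integral>x. (cmod (f x - g x))\<^sup>2 \<partial>M) + 2 * (\<integral>x. (cmod (g x - h x))\<^sup>2 \<partial>M)"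
proof -
  have "(\<integral>x. (cmod (f x - h x))\<^sup>2 \<partial>M) \<le> (\<integral>x. 2 * (cmod (f x - g x))\<^sup>2 + 2 * (cmod (g x - h x))\<^sup>2 \<partial>M)"
  proof (rule integral_mono)
    show "integrable M (\<lambda>x. (cmod (f x - h x))\<^sup>2)" using L2_diff_int assms by blast
    show "integrable M (\<lambda>x. 2 * (cmod (f x - g x))\<^sup>2 + 2 * (cmod (g x - h x))\<^sup>2)"
      by (intro Bochner_Integration.integrable_add integrable_mult_right L2_diff_int assms)
    show "(cmod (f x - h x))\<^sup>2 \<le> 2 * (cmod (f x - g x))\<^sup>2 + 2 * (cmod (g x - h x))\<^sup>2" for x
      using sq_le_add[of "f x - g x" "g x - h x"] by simp
  qed
  also have "\<dots> = 2 * (\<integral>x. (cmod (f x - g x))\<^sup>2 \<partial>M) + 2 * (\<integral>x. (cmod (g x - h x))\<^sup>2 \<partial>M)"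
    using L2_diff_int[OF assms(1,2)] L2_diff_int[OF assms(2,3)] by simp
  finally show ?thesis .
qed





locale apx_setup = prob_space M for M :: "'a measure" +
  fixes TP :: "('a \<Rightarrow> complex) set"
  assumes TP_L2: "P \<in> TP \<Longrightarrow> L2 M P"
    and TP_add: "P \<in> TP \<Longrightarrow> Q \<in> TP \<Longrightarrow> (\<lambda>x. P x + Q x) \<in> TP"
    and TP_scale: "P \<in> TP \<Longrightarrow> (\<lambda>x. c * P x) \<in> TP"
    and TP_const: "(\<lambda>x. c) \<in> TP"
begin

definition apx where
  "apx f \<longleftrightarrow> L2 M f \<and> (\<forall>\<epsilon>>0. \<exists>P\<in>TP. (\<integral>x. (cmod (f x - P x))\<^sup>2 \<partial>M) < \<epsilon>)"

lemma apxD1: "apx f \<Longrightarrow> L2 M f" unfolding apx_def by simp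

lemma apxD2: assumes "apx f" "\<epsilon> > 0"
  obtains P where "P \<in> TP" "(\<integral>x. (cmod (f x - P x))\<^sup>2 \<partial>M) < \<epsilon>"
  using assms unfolding apx_def by auto

lemma apxI: "L2 M f \<Longrightarrow> (\<And>\<epsilon>. \<epsilon> > 0 \<Longrightarrow> \<exists>P\<in>TP. (\<integral>x. (cmod (f x - P x))\<^sup>2 \<partial>M) < \<epsilon>) \<Longrightarrow> apx f"
  unfolding apx_def by simp

lemma apx_TP: "P \<in> TP \<Longrightarrow> apx P"
  by (rule apxI[OF TP_L2]) (auto intro!: bexI[of _ P])

lemma apx_add: assumes "apx f" "apx g" shows "apx (\<lambda>x. f x + g x)"
proof (rule apxI)
  have f: "L2 M f" and g: "L2 M g" using assms by (simp_all add: apxD1)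
  show "L2 M (\<lambda>x. f x + g x)" using L2_add[OF f g] .
  fix \<epsilon> :: real assume e: "\<epsilon> > 0"
  hence e4: "\<epsilon>/4 > 0" by simp
  obtain P where P: "P \<in> TP" "(\<integral>x. (cmod (f x - P x))\<^sup>2 \<partial>M) < \<epsilon>/4"
    using apxD2[OF assms(1) e4] .
  obtain Q where Q: "Q \<in> TP" "(\<integral>x. (cmod (g x - Q x))\<^sup>2 \<partial>M) < \<epsilon>/4"
    using apxD2[OF assms(2) e4] .
  have i1: "integrable M (\<lambda>x. (cmod (f x - P x))\<^sup>2)" by (rule L2_diff_int[OF f TP_L2[OF P(1)]])
  have i2: "integrable M (\<lambda>x. (cmod (g x - Q x))\<^sup>2)" by (rule L2_diff_int[OF g TP_L2[OF Q(1)]])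
  have i3: "integrable M (\<lambda>x. (cmod (f x + g x - (P x + Q x)))\<^sup>2)"
    by (rule L2_diff_int[OF L2_add[OF f g] L2_add[OF TP_L2[OF P(1)] TP_L2[OF Q(1)]]])
  have "(\<integral>x. (cmod (f x + g x - (P x + Q x)))\<^sup>2 \<partial>M) \<le> (\<integral>x. 2 * (cmod (f x - P x))\<^sup>2 + 2 * (cmod (g x - Q x))\<^sup>2 \<partial>M)"
  proof (rule integral_mono[OF i3])
    show "integrable M (\<lambda>x. 2 * (cmod (f x - P x))\<^sup>2 + 2 * (cmod (g x - Q x))\<^sup>2)" using i1 i2 by simp
    show "(cmod (f x + g x - (P x + Q x)))\<^sup>2 \<le> 2 * (cmod (f x - P x))\<^sup>2 + 2 * (cmod (g x - Q x))\<^sup>2" for x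
      using sq_le_add[of "f x - P x" "g x - Q x"] by (simp add: algebra_simps)
  qed
  also have "\<dots> < \<epsilon>" using i1 i2 P Q by simp
  finally have "(\<integral>x. (cmod (f x + g x - (P x + Q x)))\<^sup>2 \<partial>M) < \<epsilon>" .
  thus "\<exists>P\<in>TP. (\<integral>x. (cmod (f x + g x - P x))\<^sup>2 \<partial>M) < \<epsilon>"
    using TP_add[OF P(1) Q(1)] by (auto intro!: bexI[of _ "\<lambda>x. P x + Q x"])
qed

lemma apx_scale: assumes "apx f" shows "apx (\<lambda>x. c * f x)"
proof (rule apxI)
  show "L2 M (\<lambda>x. c * f x)" using L2_scale[OF apxD1[OF assms]] .
  fix \<epsilon> :: real assume e: "\<epsilon> > 0"
  have d: "\<epsilon> / ((cmod c)\<^sup>2 + 1) > 0" using e by (simp add: add_nonneg_pos)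
  obtain P where P: "P \<in> TP" "(\<integral>x. (cmod (f x - P x))\<^sup>2 \<partial>M) < \<epsilon> / ((cmod c)\<^sup>2 + 1)"
    using apxD2[OF assms d] .
  have "(\<integral>x. (cmod (c * f x - c * P x))\<^sup>2 \<partial>M) = (cmod c)\<^sup>2 * (\<integral>x. (cmod (f x - P x))\<^sup>2 \<partial>M)"
    by (simp add: right_diff_distrib[symmetric] norm_mult power_mult_distrib del: right_diff_distrib)
  also have "\<dots> \<le> ((cmod c)\<^sup>2 + 1) * (\<integral>x. (cmod (f x - P x))\<^sup>2 \<partial>M)"
    by (intro mult_right_mono) auto
  also have "\<dots> < \<epsilon>" using P(2) d pos_less_divide_eq[of "(cmod c)\<^sup>2 + 1"]
    by (simp add: add_nonneg_pos mult.commute)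
  finally have "(\<integral>x. (cmod (c * f x - c * P x))\<^sup>2 \<partial>M) < \<epsilon>" .
  thus "\<exists>P\<in>TP. (\<integral>x. (cmod (c * f x - P x))\<^sup>2 \<partial>M) < \<epsilon>"
    using TP_scale[OF P(1), of c] by (auto intro!: bexI[of _ "\<lambda>x. c * P x"])
qed

lemma apx_cong: assumes "apx f" "\<And>x. x \<in> space M \<Longrightarrow> f x = g x" shows "apx g"
proof (rule apxI)
  have f: "L2 M f" using apxD1[OF assms(1)] .
  have m: "g \<in> borel_measurable M" using f assms(2) unfolding L2_def by (metis measurable_cong)
  have "integrable M (\<lambda>x. (cmod (g x))\<^sup>2) = integrable M (\<lambda>x. (cmod (f x))\<^sup>2)"
    by (rule Bochner_Integration.integrable_cong[OF refl]) (simp add: assms(2))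
  hence "integrable M (\<lambda>x. (cmod (g x))\<^sup>2)" using f unfolding L2_def by simp
  thus "L2 M g" using m unfolding L2_def by simp
  fix \<epsilon> :: real assume e: "\<epsilon> > 0"
  obtain P where P: "P \<in> TP" "(\<integral>x. (cmod (f x - P x))\<^sup>2 \<partial>M) < \<epsilon>" using apxD2[OF assms(1) e] .
  have "(\<integral>x. (cmod (g x - P x))\<^sup>2 \<partial>M) = (\<integral>x. (cmod (f x - P x))\<^sup>2 \<partial>M)"
    using assms(2) by (intro Bochner_Integration.integral_cong) auto
  thus "\<exists>P\<in>TP. (\<integral>x. (cmod (g x - P x))\<^sup>2 \<partial>M) < \<epsilon>" using P by (intro bexI[of _ P]) simp_all
qed

lemma apx_limit:
  assumes f: "L2 M f" and g: "\<And>n. apx (g n)" and lim: "(\<lambda>n. \<integral>x. (cmod (f x - g n x))\<^sup>2 \<partial>M) \<longlonglongrightarrow> 0"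
  shows "apx f"
proof (rule apxI[OF f])
  fix \<epsilon> :: real assume e: "\<epsilon> > 0"
  hence e4: "\<epsilon>/4 > 0" by simp
  obtain n where n: "\<bar>\<integral>x. (cmod (f x - g n x))\<^sup>2 \<partial>M\<bar> < \<epsilon>/4"
    using LIMSEQ_D[OF lim e4] by auto
  obtain P where P: "P \<in> TP" "(\<integral>x. (cmod (g n x - P x))\<^sup>2 \<partial>M) < \<epsilon>/4"
    using apxD2[OF g e4] .
  have "(\<integral>x. (cmod (f x - P x))\<^sup>2 \<partial>M) \<le> 2 * (\<integral>x. (cmod (f x - g n x))\<^sup>2 \<partial>M) + 2 * (\<integral>x. (cmod (g n x - P x))\<^sup>2 \<partial>M)"
    by (rule sq_tri[OF f apxD1[OF g] TP_L2[OF P(1)]])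
  also have "\<dots> < \<epsilon>" using n P by linarith
  finally show "\<exists>P\<in>TP. (\<integral>x. (cmod (f x - P x))\<^sup>2 \<partial>M) < \<epsilon>" using P by blast
qed

end



context apx_setup begin
lemma apx_dom_limit:
  assumes f: "L2 M f" and g: "\<And>n. apx (g n)"
    and lim: "\<And>x. x \<in> space M \<Longrightarrow> (\<lambda>n. g n x) \<longlonglongrightarrow> f x"
    and w: "integrable M w" and bnd: "\<And>n x. x \<in> space M \<Longrightarrow> (cmod (f x - g n x))\<^sup>2 \<le> w x"
  shows "apx f"
proof (rule apx_limit[OF f g])
  have "(\<lambda>n. \<integral>x. (cmod (f x - g n x))\<^sup>2 \<partial>M) \<longlonglongrightarrow> (\<integral>x. 0 \<partial>M)"
  proof (rule integral_dominated_convergence[where w=w])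
    show "(\<lambda>x. 0::real) \<in> borel_measurable M" by simp
    show "(\<lambda>x. (cmod (f x - g n x))\<^sup>2) \<in> borel_measurable M" for n
      using apxD1[OF g[of n]] f unfolding L2_def by auto
    show "integrable M w" by fact
    show "AE x in M. (\<lambda>n. (cmod (f x - g n x))\<^sup>2) \<longlonglongrightarrow> 0"
    proof (rule AE_I2)
      fix x assume x: "x \<in> space M"
      have "(\<lambda>n. f x - g n x) \<longlonglongrightarrow> 0" using tendsto_diff[OF tendsto_const[of "f x"] lim[OF x]] by simp
      hence "(\<lambda>n. cmod (f x - g n x)) \<longlonglongrightarrow> 0" using tendsto_norm_zero by blast
      thus "(\<lambda>n. (cmod (f x - g n x))\<^sup>2) \<longlonglongrightarrow> 0" using tendsto_power[of _ 0 _ 2] by fastforce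
    qed
    show "AE x in M. norm ((cmod (f x - g n x))\<^sup>2) \<le> w x" for n
      using bnd by (auto intro!: AE_I2)
  qed
  thus "(\<lambda>n. \<integral>x. (cmod (f x - g n x))\<^sup>2 \<partial>M) \<longlonglongrightarrow> 0" by simp
qed

lemma apx_bdd_limit:
  assumes fm: "f \<in> borel_measurable M" and g: "\<And>n. apx (g n)"
    and lim: "\<And>x. x \<in> space M \<Longrightarrow> (\<lambda>n. g n x) \<longlonglongrightarrow> f x"
    and bnd: "\<And>n x. x \<in> space M \<Longrightarrow> cmod (g n x) \<le> C"
  shows "apx f"
proof -
  have fb: "cmod (f x) \<le> C" if x: "x \<in> space M" for x
  proof (rule tendsto_upperbound[OF tendsto_norm[OF lim[OF x]]])
    show "\<forall>\<^sub>F n in sequentially. cmod (g n x) \<le> C" using bnd x by auto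
  qed simp
  have f: "L2 M f" by (rule L2_bounded[OF _ fm fb]) (simp add: finite_measure_axioms)
  show ?thesis
  proof (rule apx_dom_limit[OF f g lim, where w="\<lambda>x. (2*C)\<^sup>2"])
    show "integrable M (\<lambda>x. (2 * C)\<^sup>2)" by simp
    fix n x assume x: "x \<in> space M"
    have "cmod (f x - g n x) \<le> 2 * C" using norm_triangle_ineq4[of "f x" "g n x"] fb[OF x] bnd[OF x, of n] by linarith
    from power_mono[OF this norm_ge_zero, of 2] show "(cmod (f x - g n x))\<^sup>2 \<le> (2 * C)\<^sup>2" .
  qed
qed

lemma apx_sum: "finite I \<Longrightarrow> (\<And>i. i \<in> I \<Longrightarrow> apx (g i)) \<Longrightarrow> apx (\<lambda>x. \<Sum>i\<in>I. g i x)"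
proof (induction I rule: finite_induct)
  case empty thus ?case using apx_TP[OF TP_const[of 0]] by simp
next
  case (insert a I) thus ?case using apx_add[of "g a" "\<lambda>x. \<Sum>i\<in>I. g i x"] by simp
qed

lemma apx_simple:
  assumes ind: "\<And>A. A \<in> sets M \<Longrightarrow> apx (\<lambda>x. indicator A x)"
    and s: "simple_function M s"
  shows "apx s"
proof -
  have fin: "finite (s ` space M)" using s by (simp add: simple_function_def)
  have ms: "s -` {y} \<inter> space M \<in> sets M" if y: "y \<in> s ` space M" for y
  proof -
    obtain z where z: "z \<in> space M" "y = s z" using y by blast
    show ?thesis using s z unfolding simple_function_def by simp
  qed
  have A: "apx (\<lambda>x. \<Sum>y \<in> s ` space M. y * indicator (s -` {y} \<inter> space M) x)"
  proof (rule apx_sum[OF fin])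
    fix y assume "y \<in> s ` space M"
    show "apx (\<lambda>x. y * indicator (s -` {y} \<inter> space M) x)" by (rule apx_scale[OF ind[OF ms]]) fact
  qed
  have B: "(\<Sum>y \<in> s ` space M. y * indicator (s -` {y} \<inter> space M) x) = s x" if "x \<in> space M" for x
  proof -
    have "s x = (\<Sum>y \<in> s ` space M. indicator (s -` {y} \<inter> space M) x *\<^sub>R y)"
      by (rule simple_function_indicator_representation_banach[OF s that])
    also have "\<dots> = (\<Sum>y \<in> s ` space M. y * indicator (s -` {y} \<inter> space M) x)"
      by (intro sum.cong refl) (simp split: split_indicator)
    finally show ?thesis by (rule sym)
  qed
  show ?thesis by (rule apx_cong[OF A B])
qed

lemma apx_all:
  assumes ind: "\<And>A. A \<in> sets M \<Longrightarrow> apx (\<lambda>x. indicator A x)" and f: "L2 M f"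
  shows "apx f"
proof -
  have fm: "f \<in> borel_measurable M" using f unfolding L2_def by simp
  from borel_measurable_implies_sequence_metric[OF fm, of 0]
  obtain F where F: "(\<forall>i. simple_function M (F i)) \<and> (\<forall>x\<in>space M. (\<lambda>i. F i x) \<longlonglongrightarrow> f x) \<and>
    (\<forall>i. \<forall>x\<in>space M. dist (F i x) 0 \<le> 2 * dist (f x) 0)" by (elim exE) 
  have F1: "\<And>i. simple_function M (F i)" using F by simp
  have F2: "\<And>x. x\<in>space M \<Longrightarrow> (\<lambda>i. F i x) \<longlonglongrightarrow> f x" using F by simp
  have F3: "\<And>i x. x\<in>space M \<Longrightarrow> dist (F i x) 0 \<le> 2 * dist (f x) 0" using F by simp
  have ap: "apx (F n)" for n by (rule apx_simple[OF ind F1])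
  show ?thesis
  proof (rule apx_dom_limit[OF f ap F2, where w="\<lambda>x. 9 * (cmod (f x))\<^sup>2"])
    show "integrable M (\<lambda>x. 9 * (cmod (f x))\<^sup>2)" using f unfolding L2_def by simp
    fix n x assume x: "x \<in> space M"
    have "cmod (F n x) \<le> 2 * cmod (f x)" using F3[OF x, of n] by (simp add: dist_norm)
    hence "cmod (f x - F n x) \<le> 3 * cmod (f x)" using norm_triangle_ineq4[of "f x" "F n x"] by linarith
    from power_mono[OF this norm_ge_zero, of 2] have "(cmod (f x - F n x))\<^sup>2 \<le> (3 * cmod (f x))\<^sup>2" .
    thus "(cmod (f x - F n x))\<^sup>2 \<le> 9 * (cmod (f x))\<^sup>2" by (simp add: power_mult_distrib)
  qed
qed

end



context apx_setup begin
lemma apx_sets: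
  assumes G: "Int_stable G" "G \<subseteq> Pow (space M)" "sets M = sigma_sets (space M) G"
    and bas: "\<And>A. A \<in> G \<Longrightarrow> apx (\<lambda>x. indicator A x)"
    and A: "A \<in> sets M"
  shows "apx (\<lambda>x. indicator A x)"
proof -
  from A G(3) have "A \<in> sigma_sets (space M) G" by simp
  from G(1,2) this show ?thesis
  proof (induction rule: sigma_sets_induct_disjoint)
    case (basic A) thus ?case using bas by auto
  next
    case empty thus ?case using apx_TP[OF TP_const[of 0]] by simp
  next
    case (compl A)
    hence IH: "apx (\<lambda>x. indicator A x)" by blast
    have A: "apx (\<lambda>x. 1 + (-1) * indicator A x)" by (rule apx_add[OF apx_TP[OF TP_const] apx_scale[OF IH]])
    have B: "1 + (-1) * indicator A x = (indicator (space M - A) x :: complex)" if "x \<in> space M" for x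
      using that by (auto simp: indicator_def)
    show ?case by (rule apx_cong[OF A B])
  next
    case (union A)
    have Asets: "A i \<in> sets M" for i using union G(3) by auto
    show ?case
    proof (rule apx_bdd_limit[where g="\<lambda>n x. \<Sum>i<n. indicator (A i) x" and C=1])
      show "(\<lambda>x. indicator (\<Union>i. A i) x :: complex) \<in> borel_measurable M"
        using Asets by (intro borel_measurable_indicator) auto
      show "apx (\<lambda>x. \<Sum>i<n. indicator (A i) x)" for n using union by (intro apx_sum) auto
      fix x assume x: "x \<in> space M"
      have ri: "(\<lambda>n. \<Sum>i<n. indicator (A i) x :: real) \<longlonglongrightarrow> indicator (\<Union>i. A i) x"
      proof -
        have "(\<lambda>i. indicator (A i) x :: real) sums indicator (\<Union>i. A i) x"
          by (rule indicator_sums) (use union(1) in \<open>auto simp: disjoint_family_on_def\<close>)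
        thus ?thesis by (simp add: sums_def)
      qed
      hence "(\<lambda>n. of_real (\<Sum>i<n. indicator (A i) x :: real)) \<longlonglongrightarrow> (of_real (indicator (\<Union>i. A i) x) :: complex)"
        by (rule tendsto_of_real)
      moreover have "\<And>n. complex_of_real (\<Sum>i<n. indicator (A i) x :: real) = (\<Sum>i<n. indicator (A i) x :: complex)"
        by (simp add: indicator_def)
      moreover have "complex_of_real (indicator (\<Union>i. A i) x) = indicator (\<Union>i. A i) x"
        by (simp add: indicator_def)
      ultimately show "(\<lambda>n. \<Sum>i<n. indicator (A i) x :: complex) \<longlonglongrightarrow> indicator (\<Union>i. A i) x"
        by simp
      fix n
      have "(\<Sum>i<n. indicator (A i) x :: real) \<le> indicator (\<Union>i. A i) x"
        using ri by (intro incseq_le) (auto simp: incseq_def intro!: sum_mono2)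
      moreover have "(\<Sum>i<n. indicator (A i) x :: real) \<ge> 0" by (simp add: sum_nonneg)
      moreover have "indicator (\<Union>i. A i) x \<le> (1::real)" by (simp add: indicator_def)
      ultimately have "\<bar>\<Sum>i<n. indicator (A i) x :: real\<bar> \<le> 1" by linarith
      moreover have "(\<Sum>i<n. indicator (A i) x :: complex) = of_real (\<Sum>i<n. indicator (A i) x)"
        by (simp add: of_real_sum) (intro sum.cong refl, simp add: indicator_def)
      ultimately show "cmod (\<Sum>i<n. indicator (A i) x :: complex) \<le> 1" by (simp only: norm_of_real)
    qed
  qed
qed

end




definition tsum :: "'k set \<Rightarrow> ('k \<Rightarrow> 'x \<Rightarrow> complex) \<Rightarrow> 'x set \<Rightarrow> ('x \<Rightarrow> complex) \<Rightarrow> bool" where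
  "tsum K e X P \<longleftrightarrow> (\<exists>S c. finite S \<and> S \<subseteq> K \<and> (\<forall>x\<in>X. P x = (\<Sum>k\<in>S. c k * e k x)))"

lemma regroup:
  assumes "finite I"
  shows "(\<Sum>i\<in>I. d i * e (f i)) = (\<Sum>s\<in>f`I. (\<Sum>i\<in>{i\<in>I. f i = s}. d i) * (e s :: complex))"
  using sum.image_gen[OF assms, of "\<lambda>i. d i * e (f i)" f] by (simp add: sum_distrib_right)

lemma tsum_sum:
  assumes "finite I" "f ` I \<subseteq> K" "\<And>x. x \<in> X \<Longrightarrow> P x = (\<Sum>i\<in>I. d i * e (f i) x)"
  shows "tsum K e X P"
  unfolding tsum_def
proof (intro exI conjI ballI)
  show "finite (f ` I)" using assms by simp
  show "f ` I \<subseteq> K" by fact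
  fix x assume "x \<in> X"
  thus "P x = (\<Sum>k\<in>f ` I. (\<Sum>i\<in>{i\<in>I. f i = k}. d i) * e k x)"
    using assms(3) regroup[OF assms(1), of d "\<lambda>k. e k x" f] by simp
qed

lemma tsum_add: assumes "tsum K e X P" "tsum K e X Q" shows "tsum K e X (\<lambda>x. P x + Q x)"
proof -
  obtain S c where S: "finite S" "S \<subseteq> K" "\<And>x. x\<in>X \<Longrightarrow> P x = (\<Sum>k\<in>S. c k * e k x)"
    using assms(1) unfolding tsum_def by blast
  obtain S' c' where S': "finite S'" "S' \<subseteq> K" "\<And>x. x\<in>X \<Longrightarrow> Q x = (\<Sum>k\<in>S'. c' k * e k x)"
    using assms(2) unfolding tsum_def by blast
  show ?thesis
  proof (rule tsum_sum[where I="S <+> S'" and d="case_sum c c'" and f="case_sum id id"])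
    show "finite (S <+> S')" using S S' by simp
    show "case_sum id id ` (S <+> S') \<subseteq> K" using S S' by auto
    fix x assume "x \<in> X"
    thus "P x + Q x = (\<Sum>i\<in>S <+> S'. case_sum c c' i * e (case_sum id id i) x)"
      using S S' by (simp add: sum.Plus comp_def)
  qed
qed

lemma tsum_scale: assumes "tsum K e X P" shows "tsum K e X (\<lambda>x. a * P x)"
proof -
  obtain S c where S: "finite S" "S \<subseteq> K" "\<And>x. x\<in>X \<Longrightarrow> P x = (\<Sum>k\<in>S. c k * e k x)"
    using assms(1) unfolding tsum_def by blast
  show ?thesis unfolding tsum_def
    by (rule exI[of _ S], rule exI[of _ "\<lambda>k. a * c k"]) (simp add: S sum_distrib_left mult.assoc)
qed

lemma tsum_zero: "tsum K e X (\<lambda>x. 0)"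
  unfolding tsum_def by (rule exI[of _ "{}"]) simp

lemma tsum_cong: "tsum K e X P \<Longrightarrow> (\<And>x. x \<in> X \<Longrightarrow> P x = Q x) \<Longrightarrow> tsum K e X Q"
  unfolding tsum_def by auto

lemma tsum_mult:
  assumes "tsum K e X P" "tsum K e X Q"
    and closed: "\<And>k k'. k \<in> K \<Longrightarrow> k' \<in> K \<Longrightarrow> pl k k' \<in> K"
    and mult: "\<And>k k' x. k \<in> K \<Longrightarrow> k' \<in> K \<Longrightarrow> x \<in> X \<Longrightarrow> e k x * e k' x = e (pl k k') x"
  shows "tsum K e X (\<lambda>x. P x * Q x)"
proof -
  obtain S c where S: "finite S" "S \<subseteq> K" "\<And>x. x\<in>X \<Longrightarrow> P x = (\<Sum>k\<in>S. c k * e k x)"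
    using assms(1) unfolding tsum_def by blast
  obtain S' c' where S': "finite S'" "S' \<subseteq> K" "\<And>x. x\<in>X \<Longrightarrow> Q x = (\<Sum>k\<in>S'. c' k * e k x)"
    using assms(2) unfolding tsum_def by blast
  show ?thesis
  proof (rule tsum_sum[where I="S \<times> S'" and d="\<lambda>(k,k'). c k * c' k'" and f="\<lambda>(k,k'). pl k k'"])
    show "finite (S \<times> S')" using S S' by simp
    show "(\<lambda>(k,k'). pl k k') ` (S \<times> S') \<subseteq> K" using S(2) S'(2) by (auto intro!: closed)
    fix x assume x: "x \<in> X"
    have "P x * Q x = (\<Sum>k\<in>S. \<Sum>k'\<in>S'. (c k * e k x) * (c' k' * e k' x))"
      using S S' x by (simp add: sum_product)
    also have "\<dots> = (\<Sum>k\<in>S. \<Sum>k'\<in>S'. (c k * c' k') * e (pl k k') x)"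
    proof (intro sum.cong refl)
      fix k k' assume "k \<in> S" "k' \<in> S'"
      hence "e k x * e k' x = e (pl k k') x" using S(2) S'(2) x by (intro mult) auto
      moreover have "(c k * e k x) * (c' k' * e k' x) = (c k * c' k') * (e k x * e k' x)" by (simp add: ac_simps)
      ultimately show "(c k * e k x) * (c' k' * e k' x) = (c k * c' k') * e (pl k k') x" by simp
    qed
    also have "\<dots> = (\<Sum>i\<in>S \<times> S'. (case i of (k,k') \<Rightarrow> c k * c' k') * e (case i of (k,k') \<Rightarrow> pl k k') x)"
      unfolding sum.cartesian_product by (intro sum.cong refl) (simp add: split_beta)
    finally show "P x * Q x = (\<Sum>i\<in>S \<times> S'. (case i of (k,k') \<Rightarrow> c k * c' k') * e (case i of (k,k') \<Rightarrow> pl k k') x)" .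
  qed
qed

lemma tsum_const:
  assumes "kz \<in> K" "\<And>x. x \<in> X \<Longrightarrow> e kz x = 1"
  shows "tsum K e X (\<lambda>x. a)"
  unfolding tsum_def using assms by (intro exI[of _ "{kz}"] exI[of _ "\<lambda>_. a"]) auto

lemma tsum_prod:
  assumes "finite F" "\<And>i. i \<in> F \<Longrightarrow> tsum K e X (P i)"
    and "kz \<in> K" "\<And>x. x \<in> X \<Longrightarrow> e kz x = 1"
    and closed: "\<And>k k'. k \<in> K \<Longrightarrow> k' \<in> K \<Longrightarrow> pl k k' \<in> K"
    and mult: "\<And>k k' x. k \<in> K \<Longrightarrow> k' \<in> K \<Longrightarrow> x \<in> X \<Longrightarrow> e k x * e k' x = e (pl k k') x"
  shows "tsum K e X (\<lambda>x. \<Prod>i\<in>F. P i x)"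
  using assms(1,2)
proof (induction F rule: finite_induct)
  case empty thus ?case using tsum_const[of kz K X e] assms(3,4) by simp
next
  case (insert a F)
  have 1: "tsum K e X (P a)" using insert.prems by simp
  have 2: "tsum K e X (\<lambda>x. \<Prod>i\<in>F. P i x)" using insert by simp
  have "tsum K e X (\<lambda>x. P a x * (\<Prod>i\<in>F. P i x))" by (rule tsum_mult[OF 1 2 closed mult])
  thus ?case using insert.hyps by simp
qed

definition e1 :: "real \<Rightarrow> real \<Rightarrow> complex" where "e1 s t = exp (\<i> * complex_of_real (s * t))"

abbreviation "trig1 \<equiv> tsum UNIV e1 UNIV"

lemma e1_mult: "e1 s t * e1 s' t = e1 (s + s') t"
  unfolding e1_def by (simp add: exp_add[symmetric] algebra_simps)

lemma trig1_mult: "trig1 P \<Longrightarrow> trig1 Q \<Longrightarrow> trig1 (\<lambda>x. P x * Q x)"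
  by (rule tsum_mult[where pl="(+)"]) (auto simp: e1_mult)

lemma trig1_const: "trig1 (\<lambda>x. a)"
  by (rule tsum_const[of 0]) (auto simp: e1_def)

lemma trig1_sin: "trig1 (\<lambda>t. complex_of_real (sin (w * t)))"
proof (rule tsum_sum[where I="{True, False}" and f="\<lambda>b. if b then w else -w"
    and d="\<lambda>b. if b then 1/(2*\<i>) else -1/(2*\<i>)"])
  fix t
  have "complex_of_real (sin (w * t)) = sin (complex_of_real (w * t))" by (rule sin_of_real[symmetric])
  also have "\<dots> = (exp (\<i> * complex_of_real (w*t)) - exp (- (\<i> * complex_of_real (w*t)))) / (2 * \<i>)"
    by (rule sin_exp_eq)
  also have "\<dots> = 1/(2*\<i>) * e1 w t + (-1/(2*\<i>)) * e1 (-w) t"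
    unfolding e1_def by (simp add: field_simps)
  finally show "complex_of_real (sin (w * t)) = (\<Sum>i\<in>{True, False}. (if i then 1/(2*\<i>) else -1/(2*\<i>)) * e1 (if i then w else - w) t)"
    by simp
qed auto

lemma trig1_poly:
  assumes "real_polynomial_function p"
  shows "trig1 (\<lambda>t. complex_of_real (p (sin (w * t))))"
  using assms
proof (induction p)
  case (linear f)
  obtain cc where cc: "f = (\<lambda>x. x * cc)" using linear.hyps real_bounded_linear by blast
  have "f y = y * f 1" for y using cc by simp
  hence "complex_of_real (f (sin (w * t))) = complex_of_real (f 1) * complex_of_real (sin (w * t))" for t
    by (metis mult.commute of_real_mult)
  thus ?case using tsum_scale[OF trig1_sin, of "complex_of_real (f 1)" w] by (simp add: tsum_cong)
next
  case (const c) thus ?case using trig1_const by simp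
next
  case (add f g) thus ?case using tsum_add by fastforce
next
  case (mult f g) thus ?case using trig1_mult by fastforce
qed





definition gcut :: "real \<Rightarrow> real \<Rightarrow> real \<Rightarrow> real" where
  "gcut a n t = max 0 (min 1 (1 - n * (t - a)))"

definition hcut :: "real \<Rightarrow> real \<Rightarrow> real \<Rightarrow> real" where
  "hcut a n y = gcut a n (arcsin y * (2 * n / pi))"

lemma gcut_bounds: "0 \<le> gcut a n t" "gcut a n t \<le> 1"
  unfolding gcut_def by auto

lemma hcut_cont: "continuous_on {-1..1} (hcut a n)"
  unfolding hcut_def gcut_def
  by (intro continuous_intros continuous_on_arcsin) auto

lemma poly_exists:
  assumes "n > 0"
  shows "\<exists>p. real_polynomial_function p \<and> (\<forall>y\<in>{-1..1}. \<bar>hcut a n y - p y\<bar> < 1/n)"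
proof -
  obtain p :: "real \<Rightarrow> real" where "polynomial_function p" "\<forall>y\<in>{-1..1}. norm (hcut a n y - p y) < 1/n"
    using Stone_Weierstrass_polynomial_function[OF compact_Icc hcut_cont, of "1/n" a n] assms by auto
  thus ?thesis by (auto simp: real_polynomial_function_eq)
qed

lemma approx_halfline:
  "\<exists>P::nat \<Rightarrow> real \<Rightarrow> complex. (\<forall>k. trig1 (P k)) \<and> (\<forall>k t. cmod (P k t) \<le> 2) \<and>
     (\<forall>t. (\<lambda>k. P k t) \<longlonglongrightarrow> (if t \<le> a then 1 else 0))"
proof -
  define nn where "nn k = real (Suc k)" for k
  have nnpos: "nn k > 0" for k unfolding nn_def by simp
  have "\<forall>k. \<exists>p. real_polynomial_function p \<and> (\<forall>y\<in>{-1..1}. \<bar>hcut a (nn k) y - p y\<bar> < 1 / nn k)"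
    using poly_exists nnpos by blast
  then obtain p where p: "\<And>k. real_polynomial_function (p k)"
    "\<And>k y. y \<in> {-1..1} \<Longrightarrow> \<bar>hcut a (nn k) y - p k y\<bar> < 1 / nn k"
    by metis
  define w where "w k = pi / (2 * nn k)" for k
  define P where "P k t = complex_of_real (p k (sin (w k * t)))" for k t
  have trig: "trig1 (P k)" for k unfolding P_def by (rule trig1_poly[OF p(1)])
  have siny: "sin x \<in> {-1..1}" for x :: real by (auto simp: sin_ge_minus_one sin_le_one)
  have bnd: "cmod (P k t) \<le> 2" for k t
  proof -
    have "\<bar>hcut a (nn k) (sin (w k * t)) - p k (sin (w k * t))\<bar> < 1 / nn k" by (rule p(2)[OF siny])
    moreover have "1 / nn k \<le> 1" unfolding nn_def by simp
    moreover have "0 \<le> hcut a (nn k) (sin (w k * t))" "hcut a (nn k) (sin (w k * t)) \<le> 1"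
      unfolding hcut_def by (rule gcut_bounds)+
    ultimately have "\<bar>p k (sin (w k * t))\<bar> \<le> 2" by linarith
    thus ?thesis unfolding P_def by simp
  qed
  have conv: "(\<lambda>k. p k (sin (w k * t))) \<longlonglongrightarrow> (if t \<le> a then 1 else 0)" for t
  proof (rule LIMSEQ_I)
    fix r :: real assume r: "r > 0"
    define N0 where "N0 = max \<bar>t\<bar> (max (1/r) (if t > a then 1/(t-a) else 0))"
    obtain N :: nat where N: "N0 < real N" using reals_Archimedean2 by blast
    show "\<exists>N. \<forall>k\<ge>N. norm (p k (sin (w k * t)) - (if t \<le> a then 1 else 0)) < r"
    proof (intro exI allI impI)
      fix k assume k: "N \<le> k"
      have nk: "N0 < nn k" using N k unfolding nn_def by linarith
      have wpos: "w k > 0" unfolding w_def using nnpos[of k] by simp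
      have "\<bar>t\<bar> \<le> nn k" using nk unfolding N0_def by linarith
      hence "\<bar>w k * t\<bar> \<le> pi/2" unfolding w_def using nnpos[of k]
        by (simp add: abs_mult field_simps)
      hence as: "arcsin (sin (w k * t)) = w k * t" by (intro arcsin_sin) auto
      have hval: "hcut a (nn k) (sin (w k * t)) = gcut a (nn k) t"
        unfolding hcut_def using as nnpos[of k] by (simp add: w_def)
      have gval: "gcut a (nn k) t = (if t \<le> a then 1 else 0)"
      proof (cases "t \<le> a")
        case True
        hence "nn k * (t - a) \<le> 0" using nnpos[of k] by (simp add: mult_nonneg_nonpos)
        thus ?thesis using True unfolding gcut_def by simp
      next
        case False
        hence "1/(t-a) < nn k" using nk unfolding N0_def by auto
        hence "1 < nn k * (t - a)" using False by (simp add: field_simps)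
        thus ?thesis using False unfolding gcut_def by simp
      qed
      have "\<bar>hcut a (nn k) (sin (w k * t)) - p k (sin (w k * t))\<bar> < 1 / nn k" by (rule p(2)[OF siny])
      moreover have "1 / nn k < r"
      proof -
        have "1/r < nn k" using nk unfolding N0_def by linarith
        thus ?thesis using r nnpos[of k] by (simp add: field_simps)
      qed
      ultimately show "norm (p k (sin (w k * t)) - (if t \<le> a then 1 else 0)) < r"
        using hval gval by simp
    qed
  qed
  have "(\<lambda>k. P k t) \<longlonglongrightarrow> (if t \<le> a then 1 else 0)" for t
  proof -
    have "(\<lambda>k. complex_of_real (p k (sin (w k * t)))) \<longlonglongrightarrow> complex_of_real (if t \<le> a then 1 else 0)"
      by (rule tendsto_of_real[OF conv])
    moreover have "complex_of_real (if t \<le> a then 1 else 0) = (if t \<le> a then 1 else 0)" by simp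
    ultimately show ?thesis unfolding P_def by (simp only:)
  qed
  thus ?thesis using trig bnd by blast
qed





definition eQ :: "('q::real_normed_vector \<Rightarrow> real) \<Rightarrow> (('q \<Rightarrow> real) \<Rightarrow> real) \<Rightarrow> complex" where
  "eQ l x = exp (\<i> * complex_of_real (x l))"

lemma Qstar_add: "l \<in> Qstar \<Longrightarrow> l' \<in> Qstar \<Longrightarrow> (\<lambda>\<phi>. l \<phi> + l' \<phi>) \<in> Qstar"
  unfolding Qstar_def by (auto intro: bounded_linear_add)

lemma Qstar_scale: "l \<in> Qstar \<Longrightarrow> (\<lambda>\<phi>. c * l \<phi>) \<in> Qstar"
  unfolding Qstar_def by (auto intro: bounded_linear_compose[OF bounded_linear_mult_right])

lemma Qstar_zero: "(\<lambda>\<phi>. 0) \<in> Qstar"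
  unfolding Qstar_def by simp

lemma Qhat_add: "x \<in> Qhat \<Longrightarrow> l \<in> Qstar \<Longrightarrow> l' \<in> Qstar \<Longrightarrow> x (\<lambda>\<phi>. l \<phi> + l' \<phi>) = x l + x l'"
  unfolding Qhat_def by blast

lemma Qhat_scale: "x \<in> Qhat \<Longrightarrow> l \<in> Qstar \<Longrightarrow> x (\<lambda>\<phi>. c * l \<phi>) = c * x l"
  unfolding Qhat_def by blast

lemma Qhat_zero: "x \<in> Qhat \<Longrightarrow> x (\<lambda>\<phi>. 0) = 0"
  using Qhat_scale[OF _ Qstar_zero, of x 0] by simp

lemma eQ_mult: "x \<in> Qhat \<Longrightarrow> l \<in> Qstar \<Longrightarrow> l' \<in> Qstar \<Longrightarrow> eQ l x * eQ l' x = eQ (\<lambda>\<phi>. l \<phi> + l' \<phi>) x"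
  unfolding eQ_def by (simp add: Qhat_add exp_add[symmetric] algebra_simps)

lemma eQ_zero: "x \<in> Qhat \<Longrightarrow> eQ (\<lambda>\<phi>. 0) x = 1"
  unfolding eQ_def by (simp add: Qhat_zero)

lemma norm_eQ: "cmod (eQ l x) = 1"
  unfolding eQ_def by (simp add: norm_exp_i_times)

abbreviation "trigQ \<equiv> tsum Qstar eQ Qhat"

lemma trigQ_mult: "trigQ P \<Longrightarrow> trigQ Q \<Longrightarrow> trigQ (\<lambda>x. P x * Q x)"
  by (rule tsum_mult[where pl="\<lambda>l l' \<phi>. l \<phi> + l' \<phi>"]) (auto intro: Qstar_add eQ_mult)

lemma trigQ_prod: "finite F \<Longrightarrow> (\<And>i. i \<in> F \<Longrightarrow> trigQ (P i)) \<Longrightarrow> trigQ (\<lambda>x. \<Prod>i\<in>F. P i x)"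
  by (rule tsum_prod[where pl="\<lambda>l l' \<phi>. l \<phi> + l' \<phi>" and kz="\<lambda>\<phi>. 0"])
    (auto intro: Qstar_add eQ_mult Qstar_zero eQ_zero)

lemma trigQ_const: "trigQ (\<lambda>x. a)"
  by (rule tsum_const[of "\<lambda>\<phi>. 0"]) (auto intro: Qstar_zero eQ_zero)

lemma trigQ_from1:
  assumes "trig1 P" "l \<in> Qstar"
  shows "trigQ (\<lambda>x. P (x l))"
proof -
  obtain S c where S: "finite S" "\<And>t. P t = (\<Sum>s\<in>S. c s * e1 s t)"
    using assms(1) unfolding tsum_def by blast
  show ?thesis
  proof (rule tsum_sum[where I=S and d=c and f="\<lambda>s \<phi>. s * l \<phi>"])
    show "finite S" by fact
    show "(\<lambda>s \<phi>. s * l \<phi>) ` S \<subseteq> Qstar" using Qstar_scale[OF assms(2)] by auto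
    fix x :: "('a \<Rightarrow> real) \<Rightarrow> real" assume x: "x \<in> Qhat"
    show "P (x l) = (\<Sum>s\<in>S. c s * eQ (\<lambda>\<phi>. s * l \<phi>) x)"
      unfolding S(2) e1_def eQ_def using Qhat_scale[OF x assms(2)] by simp
  qed
qed

locale qsetup =
  fixes \<nu> :: "(('q::real_normed_vector \<Rightarrow> real) \<Rightarrow> real) measure"
  assumes prob: "prob_space \<nu>" and sp: "space \<nu> = Qhat" and st: "sets \<nu> = Qhat_sets"
begin

lemma meas_eval: assumes "l \<in> Qstar" shows "(\<lambda>x. x l) \<in> borel_measurable \<nu>"
proof (rule measurableI)
  fix A :: "real set" assume "A \<in> sets borel"
  hence "{x \<in> Qhat. x l \<in> A} \<in> (\<Union>l\<in>Qstar. {{x \<in> Qhat. x l \<in> B} | B. B \<in> sets borel})"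
    using assms \<open>A \<in> sets borel\<close> by (intro UN_I[of l]) auto
  hence "{x \<in> Qhat. x l \<in> A} \<in> Qhat_sets" unfolding Qhat_sets_def by (rule sigma_sets.Basic)
  moreover have "(\<lambda>x. x l) -` A \<inter> space \<nu> = {x \<in> Qhat. x l \<in> A}" using sp by auto
  ultimately show "(\<lambda>x. x l) -` A \<inter> space \<nu> \<in> sets \<nu>" using st by simp
qed simp

lemma meas_trigQ: assumes "trigQ P" shows "P \<in> borel_measurable \<nu>"
proof -
  obtain S c where S: "finite S" "S \<subseteq> Qstar" "\<And>x. x \<in> Qhat \<Longrightarrow> P x = (\<Sum>k\<in>S. c k * eQ k x)"
    using assms unfolding tsum_def by blast
  have "(\<lambda>x. \<Sum>k\<in>S. c k * eQ k x) \<in> borel_measurable \<nu>"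
    unfolding eQ_def using S(2) meas_eval by (intro borel_measurable_sum borel_measurable_times borel_measurable_exp
       borel_measurable_const borel_measurable_of_real) auto
  moreover have "\<And>w. w \<in> space \<nu> \<Longrightarrow> P w = (\<Sum>k\<in>S. c k * eQ k w)" using S(3) sp by simp
  ultimately show ?thesis using measurable_cong[of \<nu> P "\<lambda>x. \<Sum>k\<in>S. c k * eQ k x" borel] by simp
qed

lemma bnd_trigQ: assumes "trigQ P" obtains C where "\<And>x. x \<in> Qhat \<Longrightarrow> cmod (P x) \<le> C"
proof -
  obtain S c where S: "finite S" "S \<subseteq> Qstar" "\<And>x. x \<in> Qhat \<Longrightarrow> P x = (\<Sum>k\<in>S. c k * eQ k x)"
    using assms unfolding tsum_def by blast
  have "cmod (P x) \<le> (\<Sum>k\<in>S. cmod (c k))" if "x \<in> Qhat" for x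
  proof -
    have "cmod (P x) \<le> (\<Sum>k\<in>S. cmod (c k * eQ k x))" unfolding S(3)[OF that] by (rule norm_sum)
    also have "\<dots> = (\<Sum>k\<in>S. cmod (c k))" by (simp add: norm_mult norm_eQ)
    finally show ?thesis .
  qed
  thus ?thesis using that by blast
qed

lemma L2_trigQ: assumes "trigQ P" shows "L2 \<nu> P"
proof -
  obtain C where C: "\<And>x. x \<in> Qhat \<Longrightarrow> cmod (P x) \<le> C" using bnd_trigQ[OF assms] by blast
  show ?thesis
    by (rule L2_bounded[OF prob_space.finite_measure[OF prob] meas_trigQ[OF assms]]) (use C sp in auto)
qed

sublocale apx_setup \<nu> "Collect trigQ"
  by (rule apx_setup.intro[OF prob], unfold_locales) (auto intro: L2_trigQ tsum_add tsum_scale trigQ_const)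

definition G2 :: "(('q \<Rightarrow> real) \<Rightarrow> real) set set" where
  "G2 = {{x \<in> Qhat. \<forall>p\<in>F. x (fst p) \<le> snd p} | F. finite F \<and> fst ` F \<subseteq> Qstar}"

lemma G2_Int: "Int_stable G2"
  unfolding Int_stable_def G2_def
proof (safe)
  fix F F' :: "(('q \<Rightarrow> real) \<times> real) set"
  assume "finite F" "fst ` F \<subseteq> Qstar" "finite F'" "fst ` F' \<subseteq> Qstar"
  thus "\<exists>F''. {x \<in> Qhat. \<forall>p\<in>F. x (fst p) \<le> snd p} \<inter> {x \<in> Qhat. \<forall>p\<in>F'. x (fst p) \<le> snd p}
      = {x \<in> Qhat. \<forall>p\<in>F''. x (fst p) \<le> snd p} \<and> finite F'' \<and> fst ` F'' \<subseteq> Qstar"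
    by (intro exI[of _ "F \<union> F'"]) auto
qed

lemma G2_Pow: "G2 \<subseteq> Pow Qhat" unfolding G2_def by auto

lemma G2_sets: "sets \<nu> = sigma_sets Qhat G2"
proof -
  have "sigma_sets Qhat (\<Union>l\<in>Qstar. {{x \<in> Qhat. x l \<in> B} | B. B \<in> sets borel}) = sigma_sets Qhat G2"
  proof (rule sigma_sets_eqI)
    fix a :: "(('q \<Rightarrow> real) \<Rightarrow> real) set" assume "a \<in> (\<Union>l\<in>Qstar. {{x \<in> Qhat. x l \<in> B} | B. B \<in> sets borel})"
    then obtain l :: "'q \<Rightarrow> real" and B where lB: "l \<in> Qstar" "B \<in> sets borel" "a = {x \<in> Qhat. x l \<in> B}" by blast
    let ?N = "sigma Qhat G2"
    have spN: "space ?N = Qhat" using G2_Pow by (simp add: space_measure_of_conv)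
    have stN: "sets ?N = sigma_sets Qhat G2" using G2_Pow by (simp add: sets_measure_of)
    have "(\<lambda>x. x l) \<in> borel_measurable ?N"
      unfolding borel_measurable_iff_le
    proof
      fix c :: real
      have "{w \<in> Qhat. \<forall>p\<in>{(l,c)}. w (fst p) \<le> snd p} \<in> G2"
        unfolding G2_def using lB(1) by (intro CollectI exI[of _ "{(l,c)}"]) simp
      hence "{w \<in> Qhat. w l \<le> c} \<in> G2" by simp
      thus "{w \<in> space ?N. w l \<le> c} \<in> sets ?N" using spN stN by auto
    qed
    from measurable_sets[OF this lB(2)]
    have "(\<lambda>x. x l) -` B \<inter> Qhat \<in> sigma_sets Qhat G2" using spN stN by simp
    moreover have "(\<lambda>x. x l) -` B \<inter> Qhat = a" using lB(3) by auto
    ultimately show "a \<in> sigma_sets Qhat G2" by simp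
  next
    fix b :: "(('q \<Rightarrow> real) \<Rightarrow> real) set" assume "b \<in> G2"
    then obtain F where F: "finite F" "fst ` F \<subseteq> Qstar" "b = {x \<in> Qhat. \<forall>p\<in>F. x (fst p) \<le> snd p}"
      unfolding G2_def by blast
    have "{x \<in> space \<nu>. \<forall>p\<in>F. x (fst p) \<le> snd p} \<in> sets \<nu>"
    proof (rule sets.sets_Collect_finite_All[OF _ F(1)])
      fix p assume "p \<in> F"
      hence "fst p \<in> Qstar" using F(2) by auto
      from meas_eval[OF this] show "{x \<in> space \<nu>. x (fst p) \<le> snd p} \<in> sets \<nu>"
        unfolding borel_measurable_iff_le by blast
    qed
    thus "b \<in> sigma_sets Qhat (\<Union>l\<in>Qstar. {{x \<in> Qhat. x l \<in> B} | B. B \<in> sets borel})"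
      using F(3) sp st unfolding Qhat_sets_def by simp
  qed
  thus ?thesis using st unfolding Qhat_sets_def by simp
qed

lemma G2_apx: assumes "A \<in> G2" shows "apx (\<lambda>x. indicator A x)"
proof -
  obtain F where F: "finite F" "fst ` F \<subseteq> Qstar" "A = {x \<in> Qhat. \<forall>p\<in>F. x (fst p) \<le> snd p}"
    using assms unfolding G2_def by blast
  have "\<forall>a. \<exists>P::nat \<Rightarrow> real \<Rightarrow> complex. (\<forall>k. trig1 (P k)) \<and> (\<forall>k t. cmod (P k t) \<le> 2) \<and>
     (\<forall>t. (\<lambda>k. P k t) \<longlonglongrightarrow> (if t \<le> a then 1 else 0))" using approx_halfline by blast
  then obtain PP where PP: "\<And>a k. trig1 (PP a k)" "\<And>a k t. cmod (PP a k t) \<le> 2"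
    "\<And>a t. (\<lambda>k. PP a k t) \<longlonglongrightarrow> (if t \<le> a then 1 else 0)"
    by metis
  define g where "g k x = (\<Prod>p\<in>F. PP (snd p) k (x (fst p)))" for k x
  have tg: "trigQ (g k)" for k
    unfolding g_def
  proof (rule trigQ_prod[OF F(1)])
    fix p assume "p \<in> F"
    hence "fst p \<in> Qstar" using F(2) by auto
    thus "trigQ (\<lambda>x. PP (snd p) k (x (fst p)))" by (rule trigQ_from1[OF PP(1)])
  qed
  show ?thesis
  proof (rule apx_bdd_limit[where g=g and C="2 ^ card F"])
    have "A \<in> sigma_sets Qhat G2" by (rule sigma_sets.Basic[OF assms])
    hence "A \<in> sets \<nu>" using G2_sets by simp
    thus "(\<lambda>x. indicator A x :: complex) \<in> borel_measurable \<nu>" by simp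
    show "apx (g k)" for k using tg by (intro apx_TP) simp
    fix x assume x: "x \<in> space \<nu>"
    have "(\<lambda>k. g k x) \<longlonglongrightarrow> (\<Prod>p\<in>F. (if x (fst p) \<le> snd p then 1 else 0))"
      unfolding g_def by (intro tendsto_prod PP(3))
    moreover have "(\<Prod>p\<in>F. (if x (fst p) \<le> snd p then 1 else 0 :: complex)) = indicator A x"
    proof (cases "\<forall>p\<in>F. x (fst p) \<le> snd p")
      case True
      hence "x \<in> A" using x sp F(3) by simp
      moreover have "(\<Prod>p\<in>F. (if x (fst p) \<le> snd p then 1 else 0 :: complex)) = (\<Prod>p\<in>F. 1)"
        using True by (intro prod.cong refl) simp
      ultimately show ?thesis by simp
    next
      case False
      then obtain p where p: "p \<in> F" "\<not> x (fst p) \<le> snd p" by blast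
      hence "x \<notin> A" using F(3) by auto
      moreover have "(\<Prod>p\<in>F. (if x (fst p) \<le> snd p then 1 else 0 :: complex)) = 0"
        using p F(1) by (intro prod_zero) auto
      ultimately show ?thesis by simp
    qed
    ultimately show "(\<lambda>k. g k x) \<longlonglongrightarrow> indicator A x" by simp
    fix k
    have "cmod (g k x) = (\<Prod>p\<in>F. cmod (PP (snd p) k (x (fst p))))" unfolding g_def by (simp add: prod_norm)
    also have "\<dots> \<le> (\<Prod>p\<in>F. 2)" by (intro prod_mono) (auto intro: PP(2))
    also have "\<dots> = 2 ^ card F" by simp
    finally show "cmod (g k x) \<le> 2 ^ card F" .
  qed
qed

theorem apx_L2: assumes "L2 \<nu> f" shows "apx f"
proof (rule apx_all[OF _ assms])
  fix A assume A: "A \<in> sets \<nu>"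
  have s1: "G2 \<subseteq> Pow (space \<nu>)" using G2_Pow sp by simp
  have s2: "sets \<nu> = sigma_sets (space \<nu>) G2" using G2_sets sp by simp
  show "apx (\<lambda>x. indicator A x)"
    by (rule apx_sets[OF G2_Int s1 s2 G2_apx A])
qed

end




lemma dual_solve:
  fixes A :: "('v::real_vector \<Rightarrow> real) set" and x :: "('v \<Rightarrow> real) \<Rightarrow> real"
  assumes "finite B"
    and lin: "\<And>l. l \<in> A \<Longrightarrow> linear l"
    and Aadd: "\<And>l l'. l \<in> A \<Longrightarrow> l' \<in> A \<Longrightarrow> (\<lambda>\<phi>. l \<phi> + l' \<phi>) \<in> A"
    and Ascale: "\<And>l c. l \<in> A \<Longrightarrow> (\<lambda>\<phi>. c * l \<phi>) \<in> A"
    and xadd: "\<And>l l'. l \<in> A \<Longrightarrow> l' \<in> A \<Longrightarrow> x (\<lambda>\<phi>. l \<phi> + l' \<phi>) = x l + x l'"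
    and xscale: "\<And>l c. l \<in> A \<Longrightarrow> x (\<lambda>\<phi>. c * l \<phi>) = c * x l"
    and sep: "\<And>l. l \<in> A \<Longrightarrow> \<forall>b\<in>B. l b = 0 \<Longrightarrow> \<forall>u. l u = 0"
  shows "\<exists>\<phi>. \<forall>l\<in>A. l \<phi> = x l"
  using assms(1) lin Aadd Ascale xadd xscale sep
proof (induction B arbitrary: A rule: finite_induct)
  case empty
  show ?case
  proof (intro exI ballI)
    fix l assume l: "l \<in> A"
    have z: "\<And>u. l u = 0" using empty.prems(6)[OF l] by simp
    have "(\<lambda>\<phi>. 0 * l \<phi>) = l" using z by auto
    hence "x l = 0 * x l" using empty.prems(5)[OF l, of 0] by simp
    thus "l 0 = x l" using z by simp
  qed
next
  case (insert b B)
  define A' where "A' = {l \<in> A. l b = 0}"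
  have "\<exists>\<phi>. \<forall>l\<in>A'. l \<phi> = x l"
  proof (rule insert.IH)
    show "\<And>l. l \<in> A' \<Longrightarrow> linear l" using insert.prems(1) unfolding A'_def by auto
    show "\<And>l l'. l \<in> A' \<Longrightarrow> l' \<in> A' \<Longrightarrow> (\<lambda>\<phi>. l \<phi> + l' \<phi>) \<in> A'"
      using insert.prems(2) unfolding A'_def by auto
    show "\<And>l c. l \<in> A' \<Longrightarrow> (\<lambda>\<phi>. c * l \<phi>) \<in> A'"
      using insert.prems(3) unfolding A'_def by auto
    show "\<And>l l'. l \<in> A' \<Longrightarrow> l' \<in> A' \<Longrightarrow> x (\<lambda>\<phi>. l \<phi> + l' \<phi>) = x l + x l'"
      using insert.prems(4) unfolding A'_def by auto
    show "\<And>l c. l \<in> A' \<Longrightarrow> x (\<lambda>\<phi>. c * l \<phi>) = c * x l"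
      using insert.prems(5) unfolding A'_def by auto
    show "\<And>l. l \<in> A' \<Longrightarrow> \<forall>b\<in>B. l b = 0 \<Longrightarrow> \<forall>u. l u = 0"
      using insert.prems(6) unfolding A'_def by auto
  qed
  then obtain \<phi>' where \<phi>': "\<And>l. l \<in> A' \<Longrightarrow> l \<phi>' = x l" by blast
  show ?case
  proof (cases "\<forall>l\<in>A. l b = 0")
    case True
    hence "A' = A" unfolding A'_def by auto
    thus ?thesis using \<phi>' by auto
  next
    case False
    then obtain l1 where l1: "l1 \<in> A" "l1 b \<noteq> 0" by blast
    define l0 where "l0 = (\<lambda>\<phi>. (1 / l1 b) * l1 \<phi>)"
    have l0A: "l0 \<in> A" unfolding l0_def by (rule insert.prems(3)[OF l1(1)])
    have l0b: "l0 b = 1" unfolding l0_def using l1(2) by simp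
    define t where "t = x l0 - l0 \<phi>'"
    show ?thesis
    proof (intro exI ballI)
      fix l assume l: "l \<in> A"
      define m where "m = (\<lambda>\<phi>. l \<phi> + (- l b) * l0 \<phi>)"
      have mA: "m \<in> A" unfolding m_def by (intro insert.prems(2) l insert.prems(3) l0A)
      have mb: "m b = 0" unfolding m_def using l0b by simp
      hence mA': "m \<in> A'" using mA unfolding A'_def by simp
      have leq: "l = (\<lambda>\<phi>. m \<phi> + (l b) * l0 \<phi>)" unfolding m_def by auto
      have xl: "x l = x m + l b * x l0"
      proof -
        have "x l = x (\<lambda>\<phi>. m \<phi> + (\<lambda>\<phi>. (l b) * l0 \<phi>) \<phi>)" using leq by simp
        also have "\<dots> = x m + x (\<lambda>\<phi>. (l b) * l0 \<phi>)"
          by (rule insert.prems(4)[OF mA insert.prems(3)[OF l0A]])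
        also have "\<dots> = x m + l b * x l0" using insert.prems(5)[OF l0A] by simp
        finally show ?thesis .
      qed
      have linl: "linear l" using insert.prems(1)[OF l] .
      have linm: "linear m" using insert.prems(1)[OF mA] .
      have linl0: "linear l0" using insert.prems(1)[OF l0A] .
      have "l (\<phi>' + t *\<^sub>R b) = l \<phi>' + t * l b" using linl by (simp add: linear_add linear_scale)
      also have "l \<phi>' = m \<phi>' + l b * l0 \<phi>'" using leq by (metis (no_types))
      also have "m \<phi>' = x m" using \<phi>'[OF mA'] .
      finally show "l (\<phi>' + t *\<^sub>R b) = x l" using xl unfolding t_def by (simp add: algebra_simps)
    qed
  qed
qed

lemma canon_ext_exp:
  fixes l :: "'q::real_normed_vector \<Rightarrow> real"
  assumes l: "l \<in> Qstar" and x: "x \<in> Qhat"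
  shows "canon_ext (\<lambda>\<phi>. exp (\<i> * complex_of_real (l \<phi>))) x = exp (\<i> * complex_of_real (x l))"
proof -
  define f where "f = (\<lambda>\<phi>. exp (\<i> * complex_of_real (l \<phi>)))"
  have bl: "bounded_linear l" using l unfolding Qstar_def by simp
  hence lin: "linear l" by (rule bounded_linear.linear)
  have ex: "\<exists>W. closed_fin_codim W \<and> transl_invariant f W"
  proof (intro exI conjI)
    let ?W = "{w. l w = 0}"
    show "closed_fin_codim ?W"
      unfolding closed_fin_codim_def
    proof (intro conjI)
      show "subspace ?W" by (rule linear_subspace_kernel[OF lin])
      show "closed ?W"
        by (rule closed_Collect_eq) (auto intro: linear_continuous_on bl)
      show "\<exists>B. finite B \<and> span (?W \<union> B) = UNIV"
      proof (cases "\<forall>v. l v = 0")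
        case True
        hence "?W = UNIV" by auto
        thus ?thesis by (intro exI[of _ "{}"]) simp
      next
        case False
        then obtain v where v: "l v \<noteq> 0" by blast
        show ?thesis
        proof (intro exI conjI)
          show "finite {v}" by simp
          show "span (?W \<union> {v}) = UNIV"
          proof (rule set_eqI, rule iffI)
            fix \<phi> :: 'q
            have "\<phi> - (l \<phi> / l v) *\<^sub>R v \<in> ?W" using v lin by (simp add: linear_diff linear_scale)
            hence a: "\<phi> - (l \<phi> / l v) *\<^sub>R v \<in> span (?W \<union> {v})" by (auto intro: span_base)
            have b: "(l \<phi> / l v) *\<^sub>R v \<in> span (?W \<union> {v})" by (auto intro: span_scale span_base)
            have "\<phi> = (\<phi> - (l \<phi> / l v) *\<^sub>R v) + (l \<phi> / l v) *\<^sub>R v" by simp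
            thus "\<phi> \<in> span (?W \<union> {v})" using span_add[OF a b] by metis
          qed simp
        qed
      qed
    qed
    show "transl_invariant f ?W"
      unfolding transl_invariant_def f_def using lin by (auto simp: linear_add)
  qed
  define W where "W = (SOME W. closed_fin_codim W \<and> transl_invariant f W)"
  have W: "closed_fin_codim W" "transl_invariant f W"
    using someI_ex[OF ex] unfolding W_def by auto
  have subW: "subspace W" using W(1) unfolding closed_fin_codim_def by simp
  have annl: "l w = 0" if w: "w \<in> W" for w
  proof (rule ccontr)
    assume nz: "l w \<noteq> 0"
    define t where "t = pi / l w"
    have "t *\<^sub>R w \<in> W" using subspace_scale[OF subW w] by simp
    hence "f (0 + t *\<^sub>R w) = f 0" using W(2) unfolding transl_invariant_def by blast
    moreover have "l (t *\<^sub>R w) = pi" using nz lin unfolding t_def by (simp add: linear_scale)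
    moreover have "l 0 = 0" using lin by (simp add: linear_0)
    ultimately have "exp (\<i> * complex_of_real pi) = 1" unfolding f_def by simp
    thus False by simp
  qed
  obtain B where B: "finite B" "span (W \<union> B) = UNIV" using W(1) unfolding closed_fin_codim_def by blast
  define A where "A = {l' \<in> Qstar. \<forall>w\<in>W. l' w = (0::real)}"
  have exphi: "\<exists>\<phi>. \<forall>l'\<in>A. l' \<phi> = x l'"
  proof (rule dual_solve[OF B(1)])
    show "\<And>l'. l' \<in> A \<Longrightarrow> linear l'" unfolding A_def Qstar_def by (auto intro: bounded_linear.linear)
    show "\<And>l l'. l \<in> A \<Longrightarrow> l' \<in> A \<Longrightarrow> (\<lambda>\<phi>. l \<phi> + l' \<phi>) \<in> A" unfolding A_def by (auto intro: Qstar_add)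
    show "\<And>l c. l \<in> A \<Longrightarrow> (\<lambda>\<phi>. c * l \<phi>) \<in> A" unfolding A_def by (auto intro: Qstar_scale)
    show "\<And>l l'. l \<in> A \<Longrightarrow> l' \<in> A \<Longrightarrow> x (\<lambda>\<phi>. l \<phi> + l' \<phi>) = x l + x l'"
      unfolding A_def using Qhat_add[OF x] by auto
    show "\<And>l c. l \<in> A \<Longrightarrow> x (\<lambda>\<phi>. c * l \<phi>) = c * x l"
      unfolding A_def using Qhat_scale[OF x] by auto
    fix l' assume l': "l' \<in> A" and b0: "\<forall>b\<in>B. l' b = 0"
    have linl': "linear l'" using l' unfolding A_def Qstar_def by (auto intro: bounded_linear.linear)
    show "\<forall>u. l' u = 0"
    proof
      fix u :: 'q
      have uu: "u \<in> span (W \<union> B)" using B(2) by simp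
      show "l' u = 0" by (rule linear_eq_0_on_span[OF linl' _ uu]) (use l' b0 in \<open>auto simp: A_def\<close>)
    qed
  qed
  define \<phi>0 where "\<phi>0 = (SOME \<phi>. \<forall>l'\<in>Qstar. (\<forall>w\<in>W. l' w = 0) \<longrightarrow> l' \<phi> = x l')"
  have "\<exists>\<phi>. \<forall>l'\<in>Qstar. (\<forall>w\<in>W. l' w = 0) \<longrightarrow> l' \<phi> = x l'" using exphi unfolding A_def by auto
  hence p0: "\<forall>l'\<in>Qstar. (\<forall>w\<in>W. l' w = 0) \<longrightarrow> l' \<phi>0 = x l'" unfolding \<phi>0_def by (rule someI_ex)
  have "l \<phi>0 = x l" using p0 l annl by blast
  moreover have "canon_ext f x = f \<phi>0" unfolding canon_ext_def Let_def W_def[symmetric] \<phi>0_def ..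
  ultimately show ?thesis unfolding f_def by simp
qed





lemma key_tau:
  fixes br :: "'l::real_vector \<Rightarrow> 'l \<Rightarrow> real"
    and q :: "'l \<Rightarrow> 'q::real_normed_vector"
    and \<Omega> :: "'q \<Rightarrow> 'q \<Rightarrow> complex"
  assumes bil: "bilinear br"
    and dsum2: "\<forall>\<xi>. \<exists>m\<in>Mspace br. \<exists>n\<in>Nspace br. \<xi> = m + n"
    and q_ker: "\<forall>\<tau>. q \<tau> = 0 \<longleftrightarrow> \<tau> \<in> Mspace br"
    and \<Omega>_lin: "\<forall>\<phi>. linear (\<Omega> \<phi>)"
    and \<Omega>_sym: "\<forall>\<phi> \<phi>'. \<Omega> \<phi> \<phi>' = \<Omega> \<phi>' \<phi>"
    and br_onto: "\<forall>l::'q \<Rightarrow> real. bounded_linear l \<longrightarrow> (\<exists>\<xi>. l = brQ br q \<xi>)"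
    and l: "l \<in> Qstar"
  shows "\<exists>\<tau>. brQ br q \<tau> = l \<and> kS br q \<Omega> \<tau> = (\<lambda>\<phi>. exp (\<i> * complex_of_real (l \<phi>)))"
proof -
  obtain \<xi> where xi: "l = brQ br q \<xi>" using br_onto l unfolding Qstar_def by blast
  obtain m n where mn: "m \<in> Mspace br" "n \<in> Nspace br" "\<xi> = m + n" using dsum2 by blast
  have linfst: "linear (\<lambda>x. br x y)" for y using bil unfolding bilinear_def by simp
  have bm: "brQ br q m = l"
  proof
    fix \<phi>
    let ?s = "SOME \<tau>. q \<tau> = \<phi>"
    have "brQ br q \<xi> \<phi> = br (m + n) ?s" unfolding brQ_def mn(3) ..
    also have "\<dots> = br m ?s + br n ?s" using linear_add[OF linfst[of ?s]] by simp
    also have "br n ?s = 0" using mn(2) unfolding Nspace_def by simp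
    finally show "brQ br q m \<phi> = l \<phi>" unfolding xi brQ_def by simp
  qed
  have qm: "q m = 0" using q_ker mn(1) by blast
  have \<Omega>0: "\<Omega> 0 \<phi> = 0" for \<phi>
  proof -
    have "\<Omega> 0 \<phi> = \<Omega> \<phi> 0" using \<Omega>_sym by blast
    also have "\<dots> = 0" using linear_0[of "\<Omega> \<phi>"] \<Omega>_lin by blast
    finally show ?thesis .
  qed
  have bmm: "br m m = 0" using mn(1) unfolding Mspace_def by simp
  show ?thesis
  proof (intro exI conjI)
    show "brQ br q m = l" by (rule bm)
    show "kS br q \<Omega> m = (\<lambda>\<phi>. exp (\<i> * complex_of_real (l \<phi>)))"
      unfolding kS_def qm \<Omega>0 bmm bm by simp
  qed
qed

theorem proposition3p4:
  fixes br :: "'l::real_vector \<Rightarrow> 'l \<Rightarrow> real"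
    and q :: "'l \<Rightarrow> 'q::{real_inner, polish_space}"
    and \<Omega> :: "'q \<Rightarrow> 'q \<Rightarrow> complex"
    and \<nu> :: "(('q \<Rightarrow> real) \<Rightarrow> real) measure"
  assumes bil: "bilinear br"
    and nondeg: "\<forall>\<xi>. (\<forall>\<xi>'. omegaF br \<xi> \<xi>' = 0) \<longrightarrow> \<xi> = 0"
    and dsum: "Mspace br \<inter> Nspace br = {0}"
              "\<forall>\<xi>. \<exists>m\<in>Mspace br. \<exists>n\<in>Nspace br. \<xi> = m + n"
    and q_lin: "linear q" and q_surj: "surj q"
    and q_ker: "\<forall>\<tau>. q \<tau> = 0 \<longleftrightarrow> \<tau> \<in> Mspace br"
    and \<Omega>_lin: "\<forall>\<phi>. linear (\<Omega> \<phi>)"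
    and \<Omega>_sym: "\<forall>\<phi> \<phi>'. \<Omega> \<phi> \<phi>' = \<Omega> \<phi>' \<phi>"
    and \<Omega>_pos: "\<forall>\<phi>. \<phi> \<noteq> 0 \<longrightarrow> Re (\<Omega> \<phi> \<phi>) > 0"
    and \<Omega>_inner: "\<forall>\<phi> \<phi>'. Re (\<Omega> \<phi> \<phi>') = inner \<phi> \<phi>'"
    and Im_cont: "continuous_on UNIV (\<lambda>p. Im (\<Omega> (fst p) (snd p)))"
    and br_cont: "\<forall>\<xi>. continuous_on UNIV (brQ br q \<xi>)"
    and br_onto: "\<forall>l::'q \<Rightarrow> real. bounded_linear l \<longrightarrow> (\<exists>\<xi>. l = brQ br q \<xi>)"
    and \<nu>_space: "space \<nu> = Qhat"
    and \<nu>_sets: "sets \<nu> = Qhat_sets"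
    and \<nu>_prob: "prob_space \<nu>"
    and \<nu>_gauss: "\<forall>l\<in>Qstar. (\<integral>x. exp (\<i> * complex_of_real (x l)) \<partial>\<nu>)
                     = complex_of_real (exp (- (1/4) * (onorm l)\<^sup>2))"
  shows "\<forall>f :: (('q \<Rightarrow> real) \<Rightarrow> real) \<Rightarrow> complex.
           f \<in> borel_measurable \<nu> \<and> integrable \<nu> (\<lambda>x. (cmod (f x))\<^sup>2) \<longrightarrow>
           (\<forall>\<epsilon>>0. \<exists>T c. finite T \<and>
              integrable \<nu> (\<lambda>x. (cmod (f x - (\<Sum>\<tau>\<in>T. c \<tau> * canon_ext (kS br q \<Omega> \<tau>) x)))\<^sup>2) \<and>
              (\<integral>x. (cmod (f x - (\<Sum>\<tau>\<in>T. c \<tau> * canon_ext (kS br q \<Omega> \<tau>) x)))\<^sup>2 \<partial>\<nu>) < \<epsilon>)"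
proof (intro allI impI)
  interpret Q: qsetup \<nu> by (rule qsetup.intro[OF \<nu>_prob \<nu>_space \<nu>_sets])
  fix f :: "(('q \<Rightarrow> real) \<Rightarrow> real) \<Rightarrow> complex"
  assume "f \<in> borel_measurable \<nu> \<and> integrable \<nu> (\<lambda>x. (cmod (f x))\<^sup>2)"
  hence L2f: "L2 \<nu> f" unfolding L2_def by simp
  have apx: "Q.apx f" by (rule Q.apx_L2[OF L2f])
  fix \<epsilon> :: real assume e: "\<epsilon> > 0"
  obtain P where P: "P \<in> Collect trigQ" "(\<integral>x. (cmod (f x - P x))\<^sup>2 \<partial>\<nu>) < \<epsilon>"
    using Q.apxD2[OF apx e] by blast
  have tP: "trigQ P" using P(1) by simp
  obtain S c where S: "finite S" "S \<subseteq> Qstar" "\<And>x. x \<in> Qhat \<Longrightarrow> P x = (\<Sum>k\<in>S. c k * eQ k x)"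
    using tP unfolding tsum_def by blast
  define tau where "tau l = (SOME \<tau>. brQ br q \<tau> = l \<and> kS br q \<Omega> \<tau> = (\<lambda>\<phi>. exp (\<i> * complex_of_real (l \<phi>))))"
    for l :: "'q \<Rightarrow> real"
  have tau: "brQ br q (tau l) = l \<and> kS br q \<Omega> (tau l) = (\<lambda>\<phi>. exp (\<i> * complex_of_real (l \<phi>)))"
    if "l \<in> Qstar" for l
    unfolding tau_def by (rule someI_ex[OF key_tau[OF bil dsum(2) q_ker \<Omega>_lin \<Omega>_sym br_onto that]])
  define T where "T = tau ` S"
  define c' where "c' \<tau> = c (brQ br q \<tau>)" for \<tau>
  have inj: "inj_on tau S"
  proof (rule inj_onI)
    fix a b assume "a \<in> S" "b \<in> S" "tau a = tau b"
    thus "a = b" using tau S(2) by (metis subsetD)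
  qed
  have sumeq: "(\<Sum>\<tau>\<in>T. c' \<tau> * canon_ext (kS br q \<Omega> \<tau>) x) = P x" if x: "x \<in> space \<nu>" for x
  proof -
    have xQ: "x \<in> Qhat" using x \<nu>_space by simp
    have "(\<Sum>\<tau>\<in>T. c' \<tau> * canon_ext (kS br q \<Omega> \<tau>) x) = (\<Sum>l\<in>S. c' (tau l) * canon_ext (kS br q \<Omega> (tau l)) x)"
      unfolding T_def by (rule sum.reindex[OF inj, unfolded comp_def])
    also have "\<dots> = (\<Sum>l\<in>S. c l * eQ l x)"
    proof (rule sum.cong[OF refl])
      fix l assume "l \<in> S"
      hence lQ: "l \<in> Qstar" using S(2) by auto
      show "c' (tau l) * canon_ext (kS br q \<Omega> (tau l)) x = c l * eQ l x"
        unfolding c'_def using tau[OF lQ] canon_ext_exp[OF lQ xQ] by (simp add: eQ_def)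
    qed
    also have "\<dots> = P x" using S(3)[OF xQ] by simp
    finally show ?thesis .
  qed
  have intP: "integrable \<nu> (\<lambda>x. (cmod (f x - P x))\<^sup>2)" by (rule L2_diff_int[OF L2f Q.L2_trigQ[OF tP]])
  show "\<exists>T c. finite T \<and>
              integrable \<nu> (\<lambda>x. (cmod (f x - (\<Sum>\<tau>\<in>T. c \<tau> * canon_ext (kS br q \<Omega> \<tau>) x)))\<^sup>2) \<and>
              (\<integral>x. (cmod (f x - (\<Sum>\<tau>\<in>T. c \<tau> * canon_ext (kS br q \<Omega> \<tau>) x)))\<^sup>2 \<partial>\<nu>) < \<epsilon>"
  proof (intro exI conjI)
    show "finite T" unfolding T_def using S(1) by simp
    have "integrable \<nu> (\<lambda>x. (cmod (f x - (\<Sum>\<tau>\<in>T. c' \<tau> * canon_ext (kS br q \<Omega> \<tau>) x)))\<^sup>2) =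
          integrable \<nu> (\<lambda>x. (cmod (f x - P x))\<^sup>2)"
      by (rule Bochner_Integration.integrable_cong[OF refl]) (simp add: sumeq)
    thus "integrable \<nu> (\<lambda>x. (cmod (f x - (\<Sum>\<tau>\<in>T. c' \<tau> * canon_ext (kS br q \<Omega> \<tau>) x)))\<^sup>2)"
      using intP by simp
    have "(\<integral>x. (cmod (f x - (\<Sum>\<tau>\<in>T. c' \<tau> * canon_ext (kS br q \<Omega> \<tau>) x)))\<^sup>2 \<partial>\<nu>) =
          (\<integral>x. (cmod (f x - P x))\<^sup>2 \<partial>\<nu>)"
      by (rule Bochner_Integration.integral_cong[OF refl]) (simp add: sumeq)
    thus "(\<integral>x. (cmod (f x - (\<Sum>\<tau>\<in>T. c' \<tau> * canon_ext (kS br q \<Omega> \<tau>) x)))\<^sup>2 \<partial>\<nu>) < \<epsilon>"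
      using P(2) by simp
  qed
qed



end
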